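(* Let $(\theta, \tau) \in \mathbb{T} \times \mathbb{R}$, and define the maps $R_{\theta, \tau}(x, \omega) := (x + \theta, \omega + \tau)$ on $\mathbb{T}\times\mathbb{R}$ and $t_\tau(\omega) := \omega + \tau$ on $\mathbb{R}$ (addition on the torus is mod $2\pi$). Let $(\mu_t)_{t\ge 0}$ be a solution of the MFG problem with intrinsic frequency distribution $g$, and set $\tilde{\mu}_t := (R_{\theta + \tau t, \tau})_{\#} \mu_t$ and $\tilde{g} := (t_\tau)_{\#} g$ (push-forward measures). Then $(\tilde{\mu}_t)_{t \ge 0}$ is a solution of the MFG problem with intrinsic frequency distribution $\tilde{g}$.
   Context: $\mathbb{T} = \mathbb{R}/(2\pi\mathbb{Z})$. $g \in \mathcal{P}(\mathbb{R})$ has finite first moment. For $x\in\mathbb{T}$ and $\mu\in\mathcal{P}(\mathbb{T}\times\mathbb{R})$, $c(x,\mu) := \int 2\sin^2(\frac{x-y}{2})\,\mu(\mathrm{d}y,\mathrm{d}\omega)$. On a filtered probability space with Brownian motion $B$, $\mathcal{A}$ denotes square-integrable progressively measurable real controls. Given a flow $(\mu_t)$ in $\mathcal{P}(\mathbb{T}\times\mathbb{R})$ with second marginal $g$, disintegrated as $\mu_t(\mathrm{d}x,\mathrm{d}\omega)=\mu_t^\omega(\mathrm{d}x)g(\mathrm{d}\omega)$, the cost for frequency $\omega$ is $J^{\omega,\mu}(\alpha) = \mathbb{E}\int_0^\infty e^{-\beta t}[\frac12\alpha_t^2 + \kappa c(X_t^{\omega,\alpha},\mu_t)]\mathrm{d}t$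 with $X^{\omega,\alpha}_t = X_0^\omega + \int_0^t\alpha_s\mathrm{d}s + \omega t + \sigma B_t$, $\mathcal{L}(X_0^\omega)=\mu_0^\omega$, $\kappa\ge0$, $\beta,\sigma>0$. $(\mu_t)$ is a solution of the MFG problem with intrinsic frequency distribution $g$ if: for all $t$ the second marginal of $\mu_t$ is $g$; and there is a Borel set $E$ with $g(E)=1$ such that for all $\omega\in E$ the disintegration holds and there exists $\alpha^\omega_*\in\mathcal{A}$ with $\inf_{\alpha\in\mathcal{A}} J^{\omega,\mu}(\alpha) = J^{\omega,\mu}(\alpha^\omega_* )$ and $\mathcal{L}(X_t^{\omega,\alpha^\omega_*}) = \mu_t^\omega$ for all $t\ge0$. *)

theory Defs
  imports "HOL-Probability.Probability"
begin

text \<open>Points of the torus T = R/(2 pi Z) are represented by their canonical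
  representatives in [0, 2 pi).  A measure on T x R is a probability measure on
  the Borel sets of real x real with full mass on [0, 2 pi) x R.\<close>

definition wrap :: "real \<Rightarrow> real" where
  "wrap x = x - 2 * pi * of_int \<lfloor>x / (2 * pi)\<rfloor>"

definition torus_set :: "real set" where
  "torus_set = {0..<2 * pi}"

definition is_prob_torus :: "real measure \<Rightarrow> bool" where
  "is_prob_torus m \<longleftrightarrow> prob_space m \<and> sets m = sets borel \<and> emeasure m torus_set = 1"

definition is_prob_torus_real :: "(real \<times> real) measure \<Rightarrow> bool" where
  "is_prob_torus_real m \<longleftrightarrow> prob_space m \<and> sets m = sets borel
     \<and> emeasure m (torus_set \<times> UNIV) = 1"

definition rot :: "real \<Rightarrow> real \<Rightarrow> real \<times> real \<Rightarrow> real \<times> real" where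
  "rot \<theta> \<tau> = (\<lambda>(x, w). (wrap (x + \<theta>), w + \<tau>))"

definition transl :: "real \<Rightarrow> real \<Rightarrow> real" where
  "transl \<tau> w = w + \<tau>"

definition cost_c :: "real \<Rightarrow> (real \<times> real) measure \<Rightarrow> real" where
  "cost_c x \<mu> = (\<integral>p. 2 * (sin ((x - fst p) / 2))\<^sup>2 \<partial>\<mu>)"

definition is_filtration :: "'a measure \<Rightarrow> (real \<Rightarrow> 'a measure) \<Rightarrow> bool" where
  "is_filtration M F \<longleftrightarrow>
     (\<forall>t\<ge>0. space (F t) = space M \<and> sets (F t) \<subseteq> sets M) \<and>
     (\<forall>s t. 0 \<le> s \<longrightarrow> s \<le> t \<longrightarrow> sets (F s) \<subseteq> sets (F t))"

definition is_brownian :: "'a measure \<Rightarrow> (real \<Rightarrow> 'a measure) \<Rightarrow> (real \<Rightarrow> 'a \<Rightarrow> real) \<Rightarrow> bool" where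
  "is_brownian M F B \<longleftrightarrow>
     (\<forall>w\<in>space M. B 0 w = 0) \<and>
     (\<forall>w\<in>space M. continuous_on {0..} (\<lambda>t. B t w)) \<and>
     (\<forall>t\<ge>0. B t \<in> borel_measurable (F t)) \<and>
     (\<forall>s t. 0 \<le> s \<longrightarrow> s < t \<longrightarrow>
        distributed M lborel (\<lambda>w. B t w - B s w) (normal_density 0 (sqrt (t - s))) \<and>
        (\<forall>A\<in>sets (F s). \<forall>C\<in>sets borel.
           measure M (A \<inter> ((\<lambda>w. B t w - B s w) -` C \<inter> space M))
             = measure M A * measure M ((\<lambda>w. B t w - B s w) -` C \<inter> space M)))"

definition filtered_bm_space ::
  "'a measure \<Rightarrow> (real \<Rightarrow> 'a measure) \<Rightarrow> (real \<Rightarrow> 'a \<Rightarrow> real) \<Rightarrow> bool" where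
  "filtered_bm_space M F B \<longleftrightarrow> prob_space M \<and> is_filtration M F \<and> is_brownian M F B"

definition prog_measurable :: "(real \<Rightarrow> 'a measure) \<Rightarrow> (real \<Rightarrow> 'a \<Rightarrow> real) \<Rightarrow> bool" where
  "prog_measurable F \<alpha> \<longleftrightarrow>
     (\<forall>t\<ge>0. (\<lambda>(s, w). \<alpha> s w) \<in> borel_measurable (restrict_space borel {0..t} \<Otimes>\<^sub>M F t))"

definition admissible :: "'a measure \<Rightarrow> (real \<Rightarrow> 'a measure) \<Rightarrow> (real \<Rightarrow> 'a \<Rightarrow> real) set" where
  "admissible M F = {\<alpha>. prog_measurable F \<alpha> \<and>
      (\<forall>T\<ge>0. (\<integral>\<^sup>+ w. (\<integral>\<^sup>+ s\<in>{0..T}. ennreal ((\<alpha> s w)\<^sup>2) \<partial>lborel) \<partial>M) < \<infinity>)}"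

definition state :: "real \<Rightarrow> (real \<Rightarrow> 'a \<Rightarrow> real) \<Rightarrow> ('a \<Rightarrow> real) \<Rightarrow> real
                     \<Rightarrow> (real \<Rightarrow> 'a \<Rightarrow> real) \<Rightarrow> real \<Rightarrow> 'a \<Rightarrow> real" where
  "state \<sigma> B X0 \<omega> \<alpha> t w = X0 w + (\<integral>s\<in>{0..t}. \<alpha> s w \<partial>lborel) + \<omega> * t + \<sigma> * B t w"

definition cost_J :: "'a measure \<Rightarrow> (real \<Rightarrow> 'a \<Rightarrow> real) \<Rightarrow> real \<Rightarrow> real \<Rightarrow> real
     \<Rightarrow> ('a \<Rightarrow> real) \<Rightarrow> real \<Rightarrow> (real \<Rightarrow> (real \<times> real) measure) \<Rightarrow> (real \<Rightarrow> 'a \<Rightarrow> real) \<Rightarrow> ennreal" where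
  "cost_J M B \<sigma> \<beta> \<kappa> X0 \<omega> \<mu> \<alpha> =
     (\<integral>\<^sup>+ w. (\<integral>\<^sup>+ t\<in>{0..}. ennreal (exp (- \<beta> * t) *
         ((1/2) * (\<alpha> t w)\<^sup>2 + \<kappa> * cost_c (state \<sigma> B X0 \<omega> \<alpha> t w) (\<mu> t))) \<partial>lborel) \<partial>M)"

text \<open>(mu_t) is a solution of the MFG problem with intrinsic frequency distribution g.
  K t omega is the disintegration mu_t^omega, E the full-measure set of frequencies.\<close>
definition mfg_solution ::
  "'a measure \<Rightarrow> (real \<Rightarrow> 'a measure) \<Rightarrow> (real \<Rightarrow> 'a \<Rightarrow> real) \<Rightarrow> real \<Rightarrow> real \<Rightarrow> real
   \<Rightarrow> real measure \<Rightarrow> (real \<Rightarrow> (real \<times> real) measure) \<Rightarrow> bool" where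
  "mfg_solution M F B \<sigma> \<beta> \<kappa> g \<mu> \<longleftrightarrow>
     (\<forall>t\<ge>0. is_prob_torus_real (\<mu> t) \<and> distr (\<mu> t) borel snd = g) \<and>
     (\<exists>K :: real \<Rightarrow> real \<Rightarrow> real measure. \<exists>E \<in> sets borel. emeasure g E = 1 \<and>
        (\<forall>t\<ge>0. \<forall>A\<in>sets borel. (\<lambda>w. emeasure (K t w) A) \<in> borel_measurable borel) \<and>
        (\<forall>t\<ge>0. \<forall>A\<in>sets borel. \<forall>C\<in>sets borel.
           emeasure (\<mu> t) (A \<times> C) = (\<integral>\<^sup>+ w\<in>C. emeasure (K t w) A \<partial>g)) \<and>
        (\<forall>\<omega>\<in>E. (\<forall>t\<ge>0. is_prob_torus (K t \<omega>)) \<and>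
           (\<exists>X0. X0 \<in> borel_measurable (F 0) \<and> distr M borel (\<lambda>w. wrap (X0 w)) = K 0 \<omega> \<and>
              (\<exists>\<alpha>s\<in>admissible M F.
                 (INF \<alpha>\<in>admissible M F. cost_J M B \<sigma> \<beta> \<kappa> X0 \<omega> \<mu> \<alpha>)
                   = cost_J M B \<sigma> \<beta> \<kappa> X0 \<omega> \<mu> \<alpha>s \<and>
                 (\<forall>t\<ge>0. distr M borel (\<lambda>w. wrap (state \<sigma> B X0 \<omega> \<alpha>s t w)) = K t \<omega>)))))"

end

theory Submission imports Defs begin

lemma wrap_shift: "wrap (x + 2 * pi * of_int k) = wrap x"
proof -
  have "(x + 2 * pi * of_int k) / (2 * pi) = x / (2*pi) + of_int k" by (simp add: field_simps)
  then have "\<lfloor>(x + 2 * pi * of_int k) / (2 * pi)\<rfloor> = \<lfloor>x / (2*pi)\<rfloor> + k" by simp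
  then show ?thesis unfolding wrap_def by (simp add: algebra_simps)
qed

lemma wrap_wrap_add: "wrap (wrap a + b) = wrap (a + b)"
proof -
  have "wrap a + b = (a + b) + 2 * pi * of_int (- \<lfloor>a / (2 * pi)\<rfloor>)" unfolding wrap_def by simp
  then show ?thesis using wrap_shift by metis
qed

lemma wrap_in: "wrap x \<in> torus_set"
proof -
  have p: "2*pi > 0" by simp
  have "of_int \<lfloor>x / (2 * pi)\<rfloor> \<le> x/(2*pi)" by (rule of_int_floor_le)
  then have "of_int \<lfloor>x / (2 * pi)\<rfloor> * (2*pi) \<le> x/(2*pi) * (2*pi)" using p by (intro mult_right_mono) auto
  then have a: "2*pi * of_int \<lfloor>x / (2 * pi)\<rfloor> \<le> x" using p by (simp add: mult.commute)
  have "x/(2*pi) < of_int \<lfloor>x / (2 * pi)\<rfloor> + 1" by (rule real_of_int_floor_add_one_gt)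
  then have "x/(2*pi) * (2*pi) < (of_int \<lfloor>x / (2 * pi)\<rfloor> + 1) * (2*pi)" using p by (intro mult_strict_right_mono) auto
  then have b: "x < 2*pi * of_int \<lfloor>x / (2 * pi)\<rfloor> + 2*pi" using p by (simp add: algebra_simps)
  show ?thesis unfolding wrap_def torus_set_def using a b by simp
qed

lemma wrap_eq: "\<exists>k::int. wrap x = x + 2 * pi * of_int k"
  unfolding wrap_def by (rule exI[of _ "- \<lfloor>x / (2 * pi)\<rfloor>"]) simp

lemma sin_sq_shift: "(sin ((a + 2 * pi * of_int k) / 2))\<^sup>2 = (sin (a / 2))\<^sup>2"
proof -
  have e: "(a + 2 * pi * of_int k) / 2 = a/2 + of_int k * pi" by (simp add: field_simps)
  have s: "sin (of_int k * pi) = 0" by (simp add: sin_times_pi_eq_0)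
  have c: "(cos (of_int k * pi))\<^sup>2 = 1" using sin_cos_squared_add[of "of_int k * pi"] s by simp
  show ?thesis unfolding e sin_add using s c by (simp add: power_mult_distrib)
qed

lemma wrap_meas[measurable]: "wrap \<in> borel_measurable borel"
  unfolding wrap_def by measurable

lemma distr_comp_gen:
  fixes f :: "'a \<Rightarrow> real" and h :: "real \<Rightarrow> real"
  assumes D: "distr M borel f = N" and P: "prob_space N" and h: "h \<in> borel_measurable borel"
  shows "distr M borel (\<lambda>w. h (f w)) = distr N borel h"
proof -
  define mf where "mf = (\<lambda>A. emeasure M (f -` A \<inter> space M))"
  have sN: "sets N = sets borel" using D by (metis sets_distr)
  have spN: "space N = UNIV" using sN by (metis sets_eq_imp_space_eq space_borel)
  have ss: "sigma_sets UNIV (sets borel) = sets (borel::real measure)"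
    using sets.sigma_sets_eq[of "borel::real measure"] by simp
  have conv: "emeasure N = (\<lambda>B. if B \<in> sigma_sets UNIV (sets borel) \<and> measure_space UNIV (sigma_sets UNIV (sets borel)) mf then mf B else 0)"
  proof -
    have "N = measure_of UNIV (sets borel) mf" using D unfolding distr_def mf_def by simp
    then show ?thesis using emeasure_measure_of_conv[of UNIV "sets borel" mf] by (simp only:)
  qed
  have "emeasure N UNIV = 1" using prob_space.emeasure_space_1[OF P] spN by simp
  have ms: "measure_space UNIV (sigma_sets UNIV (sets borel)) mf"
  proof (rule ccontr)
    assume nm: "\<not> measure_space UNIV (sigma_sets UNIV (sets borel)) mf"
    have "emeasure N UNIV = 0" using fun_cong[OF conv, of UNIV] nm by (simp only: simp_thms if_False)
    then show False using \<open>emeasure N UNIV = 1\<close> by simp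
  qed
  have eqN: "\<And>B. B \<in> sets borel \<Longrightarrow> emeasure N B = mf B"
  proof -
    fix B :: "real set" assume "B \<in> sets borel"
    then have "B \<in> sigma_sets UNIV (sets borel)" using ss by (simp only:)
    then show "emeasure N B = mf B" using fun_cong[OF conv, of B] ms by (simp only: simp_thms if_True)
  qed
  have hN: "h \<in> measurable N borel" by (subst measurable_cong_sets[OF sN refl]) (rule h)
  have "distr M borel (\<lambda>w. h (f w)) = measure_of UNIV (sets borel) (\<lambda>A. emeasure M ((\<lambda>w. h (f w)) -` A \<inter> space M))"
    unfolding distr_def by simp
  also have "\<dots> = measure_of UNIV (sets borel) (emeasure (distr N borel h))"
  proof (rule measure_of_eq)
    show "sets borel \<subseteq> Pow UNIV" by simp
    fix a :: "real set" assume "a \<in> sigma_sets UNIV (sets borel)"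
    then have a: "a \<in> sets borel" using ss by (simp only:)
    then have ha: "h -` a \<in> sets borel" using h by (metis measurable_sets space_borel inf_top.right_neutral)
    have "emeasure M ((\<lambda>w. h (f w)) -` a \<inter> space M) = mf (h -` a)" unfolding mf_def by (simp add: vimage_def)
    also have "\<dots> = emeasure N (h -` a)" using eqN[OF ha] by simp
    also have "\<dots> = emeasure (distr N borel h) a" using emeasure_distr[OF hN a] spN by simp
    finally show "emeasure M ((\<lambda>w. h (f w)) -` a \<inter> space M) = emeasure (distr N borel h) a" .
  qed
  also have "\<dots> = distr N borel h" using measure_of_of_measure[of "distr N borel h"] by simp
  finally show ?thesis .
qed

lemma rot_meas[measurable]: "rot c t \<in> borel_measurable borel"
proof -
  have "rot c t \<in> measurable (borel \<Otimes>\<^sub>M borel) borel" unfolding rot_def by measurable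
  then show ?thesis by (simp only: borel_prod)
qed

lemma transl_meas[measurable]: "transl t \<in> borel_measurable borel"
  unfolding transl_def by measurable

lemma rot_vimage: "rot c t -` (A \<times> C) = (\<lambda>x. wrap (x + c)) -` A \<times> transl t -` C"
  by (auto simp: rot_def transl_def)

lemma cost_c_rot:
  assumes "sets m = sets (borel :: (real \<times> real) measure)"
  shows "cost_c (s + c) (distr m borel (rot c t)) = cost_c s m"
proof -
  have rm: "rot c t \<in> measurable m borel"
    by (subst measurable_cong_sets[OF assms refl]) (rule rot_meas)
  have "(\<lambda>p::real\<times>real. 2 * (sin ((s + c - fst p) / 2))\<^sup>2) \<in> measurable (borel \<Otimes>\<^sub>M borel) borel"
    by measurable
  then have im: "(\<lambda>p::real\<times>real. 2 * (sin ((s + c - fst p) / 2))\<^sup>2) \<in> borel_measurable borel"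
    by (simp only: borel_prod)
  have "cost_c (s + c) (distr m borel (rot c t)) = (\<integral>p. 2 * (sin ((s + c - fst (rot c t p)) / 2))\<^sup>2 \<partial>m)"
    unfolding cost_c_def using integral_distr[OF rm im] by simp
  also have "\<dots> = (\<integral>p. 2 * (sin ((s - fst p) / 2))\<^sup>2 \<partial>m)"
  proof (rule Bochner_Integration.integral_cong[OF refl])
    fix p :: "real \<times> real"
    obtain k :: int where k: "wrap (fst p + c) = fst p + c + 2 * pi * of_int k" using wrap_eq by blast
    have "s + c - fst (rot c t p) = (s - fst p) + 2 * pi * of_int (- k)"
      using k by (cases p) (simp add: rot_def)
    then show "2 * (sin ((s + c - fst (rot c t p)) / 2))\<^sup>2 = 2 * (sin ((s - fst p) / 2))\<^sup>2"
      using sin_sq_shift by metis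
  qed
  finally show ?thesis unfolding cost_c_def .
qed

theorem lemma2p2:
  fixes M :: "'a measure" and F :: "real \<Rightarrow> 'a measure" and B :: "real \<Rightarrow> 'a \<Rightarrow> real"
    and \<sigma> \<beta> \<kappa> \<theta> \<tau> :: real and g :: "real measure"
    and \<mu> :: "real \<Rightarrow> (real \<times> real) measure"
  assumes "filtered_bm_space M F B"
    and "\<sigma> > 0" and "\<beta> > 0" and "\<kappa> \<ge> 0"
    and "prob_space g" and "sets g = sets borel" and "integrable g (\<lambda>w. w)"
    and "\<theta> \<in> torus_set"
    and "mfg_solution M F B \<sigma> \<beta> \<kappa> g \<mu>"
  shows "mfg_solution M F B \<sigma> \<beta> \<kappa> (distr g borel (transl \<tau>))
           (\<lambda>t. distr (\<mu> t) borel (rot (\<theta> + \<tau> * t) \<tau>))"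
proof -
  note mfg = assms(9)[unfolded mfg_solution_def]
  have H1: "\<And>t. t \<ge> 0 \<Longrightarrow> is_prob_torus_real (\<mu> t) \<and> distr (\<mu> t) borel snd = g"
    using conjunct1[OF mfg] by simp
  obtain K :: "real \<Rightarrow> real \<Rightarrow> real measure" where
    "\<exists>E \<in> sets borel. emeasure g E = 1 \<and>
        (\<forall>t\<ge>0. \<forall>A\<in>sets borel. (\<lambda>w. emeasure (K t w) A) \<in> borel_measurable borel) \<and>
        (\<forall>t\<ge>0. \<forall>A\<in>sets borel. \<forall>C\<in>sets borel.
           emeasure (\<mu> t) (A \<times> C) = (\<integral>\<^sup>+ w\<in>C. emeasure (K t w) A \<partial>g)) \<and>
        (\<forall>\<omega>\<in>E. (\<forall>t\<ge>0. is_prob_torus (K t \<omega>)) \<and>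
           (\<exists>X0. X0 \<in> borel_measurable (F 0) \<and> distr M borel (\<lambda>w. wrap (X0 w)) = K 0 \<omega> \<and>
              (\<exists>\<alpha>s\<in>admissible M F.
                 (INF \<alpha>\<in>admissible M F. cost_J M B \<sigma> \<beta> \<kappa> X0 \<omega> \<mu> \<alpha>)
                   = cost_J M B \<sigma> \<beta> \<kappa> X0 \<omega> \<mu> \<alpha>s \<and>
                 (\<forall>t\<ge>0. distr M borel (\<lambda>w. wrap (state \<sigma> B X0 \<omega> \<alpha>s t w)) = K t \<omega>))))"
    using conjunct2[OF mfg] by (elim exE) 
  then obtain E where E: "E \<in> sets borel" and Eall: "emeasure g E = 1 \<and>
        (\<forall>t\<ge>0. \<forall>A\<in>sets borel. (\<lambda>w. emeasure (K t w) A) \<in> borel_measurable borel) \<and>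
        (\<forall>t\<ge>0. \<forall>A\<in>sets borel. \<forall>C\<in>sets borel.
           emeasure (\<mu> t) (A \<times> C) = (\<integral>\<^sup>+ w\<in>C. emeasure (K t w) A \<partial>g)) \<and>
        (\<forall>\<omega>\<in>E. (\<forall>t\<ge>0. is_prob_torus (K t \<omega>)) \<and>
           (\<exists>X0. X0 \<in> borel_measurable (F 0) \<and> distr M borel (\<lambda>w. wrap (X0 w)) = K 0 \<omega> \<and>
              (\<exists>\<alpha>s\<in>admissible M F.
                 (INF \<alpha>\<in>admissible M F. cost_J M B \<sigma> \<beta> \<kappa> X0 \<omega> \<mu> \<alpha>)
                   = cost_J M B \<sigma> \<beta> \<kappa> X0 \<omega> \<mu> \<alpha>s \<and>
                 (\<forall>t\<ge>0. distr M borel (\<lambda>w. wrap (state \<sigma> B X0 \<omega> \<alpha>s t w)) = K t \<omega>))))"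
    by (elim bexE)
  note E4 = conjunct2[OF conjunct2[OF conjunct2[OF Eall]]]
  have gE: "emeasure g E = 1" using Eall by (rule conjunct1)
  have Km: "\<And>t A. t \<ge> 0 \<Longrightarrow> A \<in> sets borel \<Longrightarrow> (\<lambda>w. emeasure (K t w) A) \<in> borel_measurable borel"
    using conjunct1[OF conjunct2[OF Eall]] by blast
  have Kd: "\<And>t A C. t \<ge> 0 \<Longrightarrow> A \<in> sets borel \<Longrightarrow> C \<in> sets borel \<Longrightarrow>
           emeasure (\<mu> t) (A \<times> C) = (\<integral>\<^sup>+ w\<in>C. emeasure (K t w) A \<partial>g)"
    using conjunct1[OF conjunct2[OF conjunct2[OF Eall]]] by blast
  have KE: "\<And>\<omega>. \<omega> \<in> E \<Longrightarrow> (\<forall>t\<ge>0. is_prob_torus (K t \<omega>)) \<and>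
           (\<exists>X0. X0 \<in> borel_measurable (F 0) \<and> distr M borel (\<lambda>w. wrap (X0 w)) = K 0 \<omega> \<and>
              (\<exists>\<alpha>s\<in>admissible M F.
                 (INF \<alpha>\<in>admissible M F. cost_J M B \<sigma> \<beta> \<kappa> X0 \<omega> \<mu> \<alpha>)
                   = cost_J M B \<sigma> \<beta> \<kappa> X0 \<omega> \<mu> \<alpha>s \<and>
                 (\<forall>t\<ge>0. distr M borel (\<lambda>w. wrap (state \<sigma> B X0 \<omega> \<alpha>s t w)) = K t \<omega>)))"
    using E4 by (rule bspec)
  define hh where "hh t = (\<lambda>x. wrap (x + (\<theta> + \<tau> * t)))" for t
  have hh_meas[measurable]: "hh t \<in> borel_measurable borel" for t unfolding hh_def by measurable
  define K' where "K' t w = (if w - \<tau> \<in> E then distr (K t (w - \<tau>)) borel (hh t) else null_measure borel)" for t w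
  define E' where "E' = (\<lambda>w::real. w - \<tau>) -` E"
  define g' where "g' = distr g borel (transl \<tau>)"
  define \<mu>' where "\<mu>' t = distr (\<mu> t) borel (rot (\<theta> + \<tau> * t) \<tau>)" for t
  have spg: "space g = UNIV" using assms(6) by (metis sets_eq_imp_space_eq space_borel)
  have tg: "transl \<tau> \<in> measurable g borel"
    by (subst measurable_cong_sets[OF assms(6) refl]) (rule transl_meas)
  have smu: "sets (\<mu> t) = sets borel" if "t \<ge> 0" for t
    using H1[OF that] unfolding is_prob_torus_real_def by blast
  have pmu: "prob_space (\<mu> t)" if "t \<ge> 0" for t
    using H1[OF that] unfolding is_prob_torus_real_def by blast
  have spmu: "space (\<mu> t) = UNIV" if "t \<ge> 0" for t
    using smu[OF that] by (metis sets_eq_imp_space_eq space_borel)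
  have rotm: "rot c \<tau> \<in> measurable (\<mu> t) borel" if "t \<ge> 0" for t c
    by (subst measurable_cong_sets[OF smu[OF that] refl]) (rule rot_meas)
  have sndm: "(snd :: real \<times> real \<Rightarrow> real) \<in> borel_measurable borel"
  proof -
    have "(snd :: real \<times> real \<Rightarrow> real) \<in> measurable (borel \<Otimes>\<^sub>M borel) borel" by measurable
    then show ?thesis by (simp only: borel_prod)
  qed
  have sndm': "snd \<in> measurable (\<mu> t) borel" if "t \<ge> 0" for t
    by (subst measurable_cong_sets[OF smu[OF that] refl]) (rule sndm)
  have sK: "sets (K t w) = sets borel" if "t \<ge> 0" "w \<in> E" for t w
    using KE[OF that(2)] that(1) unfolding is_prob_torus_def by blast
  have pK: "prob_space (K t w)" if "t \<ge> 0" "w \<in> E" for t w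
    using KE[OF that(2)] that(1) unfolding is_prob_torus_def by blast
  have spK: "space (K t w) = UNIV" if "t \<ge> 0" "w \<in> E" for t w
    using sK[OF that] by (metis sets_eq_imp_space_eq space_borel)
  have hhK: "hh s \<in> measurable (K t w) borel" if "t \<ge> 0" "w \<in> E" for t w s
    by (subst measurable_cong_sets[OF sK[OF that] refl]) (rule hh_meas)
  have eK': "emeasure (K' t w) A = (if w - \<tau> \<in> E then emeasure (K t (w - \<tau>)) (hh t -` A) else 0)"
    if "t \<ge> 0" "A \<in> sets borel" for t w A
  proof (cases "w - \<tau> \<in> E")
    case True
    then show ?thesis unfolding K'_def using emeasure_distr[OF hhK[OF that(1) True] that(2)] spK[OF that(1) True]
      by simp
  next
    case False
    then show ?thesis unfolding K'_def by simp
  qed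
  have E'b: "E' \<in> sets borel"
  proof -
    have "(\<lambda>w::real. w - \<tau>) \<in> borel_measurable borel" by measurable
    from measurable_sets[OF this E] show ?thesis unfolding E'_def by simp
  qed
  show ?thesis
    unfolding mfg_solution_def g'_def[symmetric] \<mu>'_def[symmetric]
  proof (intro conjI allI impI)
    fix t :: real assume t: "t \<ge> 0"
    show "is_prob_torus_real (\<mu>' t)"
      unfolding is_prob_torus_real_def
    proof (intro conjI)
      show "prob_space (\<mu>' t)" unfolding \<mu>'_def
        by (rule prob_space.prob_space_distr[OF pmu[OF t] rotm[OF t]])
      show "sets (\<mu>' t) = sets borel" unfolding \<mu>'_def by simp
      have "rot (\<theta> + \<tau> * t) \<tau> -` (torus_set \<times> UNIV) \<inter> space (\<mu> t) = space (\<mu> t)"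
        using wrap_in by (auto simp: rot_def)
      moreover have "torus_set \<times> (UNIV::real set) \<in> sets (borel \<Otimes>\<^sub>M borel)"
        by (intro pair_measureI) (auto simp: torus_set_def)
      then have ts: "torus_set \<times> (UNIV::real set) \<in> sets borel" by (simp only: borel_prod)
      ultimately show "emeasure (\<mu>' t) (torus_set \<times> UNIV) = 1" unfolding \<mu>'_def
        using emeasure_distr[OF rotm[OF t] ts] prob_space.emeasure_space_1[OF pmu[OF t]]
        by simp
    qed
    have "distr (\<mu>' t) borel snd = distr (\<mu> t) borel (snd \<circ> rot (\<theta> + \<tau> * t) \<tau>)"
      unfolding \<mu>'_def by (rule distr_distr[OF sndm rotm[OF t]])
    also have "snd \<circ> rot (\<theta> + \<tau> * t) \<tau> = transl \<tau> \<circ> snd"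
      by (auto simp: rot_def transl_def)
    also have "distr (\<mu> t) borel (transl \<tau> \<circ> snd) = distr (distr (\<mu> t) borel snd) borel (transl \<tau>)"
      by (rule distr_distr[symmetric, OF transl_meas sndm'[OF t]])
    also have "\<dots> = g'" unfolding g'_def using H1[OF t] by simp
    finally show "distr (\<mu>' t) borel snd = g'" .
  next
    have Eg: "E \<in> sets g" using E assms(6) by simp
    have P1: "emeasure g' E' = 1"
    proof -
      have "transl \<tau> -` E' \<inter> space g = E" unfolding E'_def spg by (auto simp: transl_def)
      then show ?thesis unfolding g'_def using emeasure_distr[OF tg E'b] gE by simp
    qed
    have hA: "hh t -` A \<in> sets borel" if "A \<in> sets borel" for t A
      using measurable_sets[OF hh_meas that] by simp
    have tC: "transl \<tau> -` C \<in> sets borel" if "C \<in> sets borel" for C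
      using measurable_sets[OF transl_meas that] by simp
    have P2m: "(\<lambda>w. emeasure (K' t w) A) \<in> borel_measurable borel" if t: "t \<ge> 0" and A: "A \<in> sets borel" for t A
    proof -
      have eq: "(\<lambda>w. emeasure (K' t w) A) = (\<lambda>w. if w \<in> E' then emeasure (K t (w - \<tau>)) (hh t -` A) else 0)"
        using eK'[OF t A] unfolding E'_def by auto
      have sm: "(\<lambda>w::real. w - \<tau>) \<in> borel_measurable borel" by measurable
      have "(\<lambda>w. emeasure (K t (w - \<tau>)) (hh t -` A)) \<in> borel_measurable borel"
        using measurable_compose[OF sm Km[OF t hA[OF A]]] by simp
      moreover have "{x \<in> space borel. x \<in> E'} \<in> sets borel" using E'b by simp
      ultimately show ?thesis unfolding eq by (intro measurable_If) auto
    qed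
    have P2: "\<forall>t\<ge>0. \<forall>A\<in>sets borel. (\<lambda>w. emeasure (K' t w) A) \<in> borel_measurable borel"
      using P2m by blast
    have P3m: "emeasure (\<mu>' t) (A \<times> C) = (\<integral>\<^sup>+ w\<in>C. emeasure (K' t w) A \<partial>g')"
      if t: "t \<ge> 0" and A: "A \<in> sets borel" and C: "C \<in> sets borel" for t A C
    proof -
      have "A \<times> C \<in> sets (borel \<Otimes>\<^sub>M borel)" using A C by (intro pair_measureI)
      then have AC: "A \<times> C \<in> sets borel" by (simp only: borel_prod)
      have "emeasure (\<mu>' t) (A \<times> C) = emeasure (\<mu> t) (rot (\<theta> + \<tau> * t) \<tau> -` (A \<times> C) \<inter> space (\<mu> t))"
        unfolding \<mu>'_def by (rule emeasure_distr[OF rotm[OF t] AC])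
      also have "\<dots> = emeasure (\<mu> t) (hh t -` A \<times> transl \<tau> -` C)"
        unfolding rot_vimage spmu[OF t] hh_def by simp
      also have "\<dots> = (\<integral>\<^sup>+ w\<in>transl \<tau> -` C. emeasure (K t w) (hh t -` A) \<partial>g)"
        by (rule Kd[OF t hA[OF A] tC[OF C]])
      also have "\<dots> = (\<integral>\<^sup>+ w. emeasure (K' t (transl \<tau> w)) A * indicator C (transl \<tau> w) \<partial>g)"
      proof (rule nn_integral_cong_AE)
        have "AE w in g. w \<in> E"
          using prob_space.prob_eq_1[OF assms(5) Eg] gE by (simp add: measure_def)
        then show "AE w in g. emeasure (K t w) (hh t -` A) * indicator (transl \<tau> -` C) w =
            emeasure (K' t (transl \<tau> w)) A * indicator C (transl \<tau> w)"
        proof (rule AE_mp, intro AE_I2 impI)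
          fix w assume w: "w \<in> E"
          have "emeasure (K' t (transl \<tau> w)) A = emeasure (K t w) (hh t -` A)"
            using eK'[OF t A, of "transl \<tau> w"] w by (simp add: transl_def)
          then show "emeasure (K t w) (hh t -` A) * indicator (transl \<tau> -` C) w =
            emeasure (K' t (transl \<tau> w)) A * indicator C (transl \<tau> w)"
            by (simp add: indicator_def)
        qed
      qed
      also have "\<dots> = (\<integral>\<^sup>+ w\<in>C. emeasure (K' t w) A \<partial>g')"
      proof -
        have "(\<lambda>w. emeasure (K' t w) A * indicator C w) \<in> borel_measurable borel"
          using P2m[OF t A] C by (intro borel_measurable_times_ennreal) auto
        then have m: "(\<lambda>w. emeasure (K' t w) A * indicator C w) \<in> borel_measurable g'"
          unfolding g'_def by (subst measurable_cong_sets[of _ borel]) auto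
        show ?thesis unfolding g'_def using nn_integral_distr[OF tg m[unfolded g'_def]] by simp
      qed
      finally show ?thesis .
    qed
    have P3: "\<forall>t\<ge>0. \<forall>A\<in>sets borel. \<forall>C\<in>sets borel.
           emeasure (\<mu>' t) (A \<times> C) = (\<integral>\<^sup>+ w\<in>C. emeasure (K' t w) A \<partial>g')"
      using P3m by blast
    have P4: "\<forall>\<omega>\<in>E'. (\<forall>t\<ge>0. is_prob_torus (K' t \<omega>)) \<and>
           (\<exists>X0. X0 \<in> borel_measurable (F 0) \<and> distr M borel (\<lambda>w. wrap (X0 w)) = K' 0 \<omega> \<and>
              (\<exists>\<alpha>s\<in>admissible M F.
                 (INF \<alpha>\<in>admissible M F. cost_J M B \<sigma> \<beta> \<kappa> X0 \<omega> \<mu>' \<alpha>)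
                   = cost_J M B \<sigma> \<beta> \<kappa> X0 \<omega> \<mu>' \<alpha>s \<and>
                 (\<forall>t\<ge>0. distr M borel (\<lambda>w. wrap (state \<sigma> B X0 \<omega> \<alpha>s t w)) = K' t \<omega>)))"
    proof
      fix \<omega>' assume w': "\<omega>' \<in> E'"
      define \<omega> where "\<omega> = \<omega>' - \<tau>"
      have wE: "\<omega> \<in> E" using w' unfolding E'_def \<omega>_def by simp
      have w'eq: "\<omega>' = \<omega> + \<tau>" unfolding \<omega>_def by simp
      have K'eq: "K' t \<omega>' = distr (K t \<omega>) borel (hh t)" for t
        unfolding K'_def \<omega>_def using wE \<omega>_def by simp
      note KEw = KE[OF wE]
      obtain X0 where X0m: "X0 \<in> borel_measurable (F 0)" and X0d: "distr M borel (\<lambda>w. wrap (X0 w)) = K 0 \<omega>"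
        and ex\<alpha>: "\<exists>\<alpha>s\<in>admissible M F.
                 (INF \<alpha>\<in>admissible M F. cost_J M B \<sigma> \<beta> \<kappa> X0 \<omega> \<mu> \<alpha>)
                   = cost_J M B \<sigma> \<beta> \<kappa> X0 \<omega> \<mu> \<alpha>s \<and>
                 (\<forall>t\<ge>0. distr M borel (\<lambda>w. wrap (state \<sigma> B X0 \<omega> \<alpha>s t w)) = K t \<omega>)"
        using conjunct2[OF KEw] by (elim exE conjE)
      obtain \<alpha>s where \<alpha>a: "\<alpha>s \<in> admissible M F" and inf: "(INF \<alpha>\<in>admissible M F. cost_J M B \<sigma> \<beta> \<kappa> X0 \<omega> \<mu> \<alpha>)
                   = cost_J M B \<sigma> \<beta> \<kappa> X0 \<omega> \<mu> \<alpha>s" and dst: "\<forall>t\<ge>0. distr M borel (\<lambda>w. wrap (state \<sigma> B X0 \<omega> \<alpha>s t w)) = K t \<omega>"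
        using ex\<alpha> by (elim bexE conjE)
      define X0' where "X0' = (\<lambda>w. X0 w + \<theta>)"
      have st: "state \<sigma> B X0' \<omega>' \<alpha> t w = state \<sigma> B X0 \<omega> \<alpha> t w + (\<theta> + \<tau> * t)" for \<alpha> t w
        unfolding state_def X0'_def w'eq by (simp add: algebra_simps)
      have cJ: "cost_J M B \<sigma> \<beta> \<kappa> X0' \<omega>' \<mu>' \<alpha> = cost_J M B \<sigma> \<beta> \<kappa> X0 \<omega> \<mu> \<alpha>" for \<alpha>
        unfolding cost_J_def
      proof (intro nn_integral_cong)
        fix w t
        show "ennreal (exp (- \<beta> * t) * ((1/2) * (\<alpha> t w)\<^sup>2 + \<kappa> * cost_c (state \<sigma> B X0' \<omega>' \<alpha> t w) (\<mu>' t))) * indicator {0..} t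
            = ennreal (exp (- \<beta> * t) * ((1/2) * (\<alpha> t w)\<^sup>2 + \<kappa> * cost_c (state \<sigma> B X0 \<omega> \<alpha> t w) (\<mu> t))) * indicator {0..} t"
        proof (cases "t \<ge> 0")
          case True
          have "cost_c (state \<sigma> B X0' \<omega>' \<alpha> t w) (\<mu>' t) = cost_c (state \<sigma> B X0 \<omega> \<alpha> t w) (\<mu> t)"
            unfolding st \<mu>'_def by (rule cost_c_rot[OF smu[OF True]])
          then show ?thesis by simp
        next
          case False
          then show ?thesis by simp
        qed
      qed
      show "(\<forall>t\<ge>0. is_prob_torus (K' t \<omega>')) \<and>
           (\<exists>X0. X0 \<in> borel_measurable (F 0) \<and> distr M borel (\<lambda>w. wrap (X0 w)) = K' 0 \<omega>' \<and>
              (\<exists>\<alpha>s\<in>admissible M F.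
                 (INF \<alpha>\<in>admissible M F. cost_J M B \<sigma> \<beta> \<kappa> X0 \<omega>' \<mu>' \<alpha>)
                   = cost_J M B \<sigma> \<beta> \<kappa> X0 \<omega>' \<mu>' \<alpha>s \<and>
                 (\<forall>t\<ge>0. distr M borel (\<lambda>w. wrap (state \<sigma> B X0 \<omega>' \<alpha>s t w)) = K' t \<omega>')))"
      proof (intro conjI allI impI exI[of _ X0'] bexI[OF _ \<alpha>a])
        fix t :: real assume t: "t \<ge> 0"
        show "is_prob_torus (K' t \<omega>')" unfolding is_prob_torus_def K'eq
        proof (intro conjI)
          show "prob_space (distr (K t \<omega>) borel (hh t))"
            by (rule prob_space.prob_space_distr[OF pK[OF t wE] hhK[OF t wE]])
          show "sets (distr (K t \<omega>) borel (hh t)) = sets borel" by simp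
          have "hh t -` torus_set \<inter> space (K t \<omega>) = space (K t \<omega>)"
            using wrap_in by (auto simp: hh_def)
          moreover have "torus_set \<in> sets borel" by (simp add: torus_set_def)
          ultimately show "emeasure (distr (K t \<omega>) borel (hh t)) torus_set = 1"
            using emeasure_distr[OF hhK[OF t wE], of torus_set] prob_space.emeasure_space_1[OF pK[OF t wE]]
            by simp
        qed
      next
        show "X0' \<in> borel_measurable (F 0)" unfolding X0'_def using X0m by simp
      next
        have "distr M borel (\<lambda>w. hh 0 (wrap (X0 w))) = distr (K 0 \<omega>) borel (hh 0)"
          by (rule distr_comp_gen[OF X0d pK[OF _ wE] hh_meas]) simp
        moreover have "(\<lambda>w. hh 0 (wrap (X0 w))) = (\<lambda>w. wrap (X0' w))"
          unfolding hh_def X0'_def by (simp add: wrap_wrap_add)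
        ultimately show "distr M borel (\<lambda>w. wrap (X0' w)) = K' 0 \<omega>'" unfolding K'eq by simp
      next
        show "(INF \<alpha>\<in>admissible M F. cost_J M B \<sigma> \<beta> \<kappa> X0' \<omega>' \<mu>' \<alpha>) = cost_J M B \<sigma> \<beta> \<kappa> X0' \<omega>' \<mu>' \<alpha>s"
          unfolding cJ by (rule inf)
      next
        fix t :: real assume t: "t \<ge> 0"
        have "distr M borel (\<lambda>w. hh t (wrap (state \<sigma> B X0 \<omega> \<alpha>s t w))) = distr (K t \<omega>) borel (hh t)"
          by (rule distr_comp_gen[OF _ pK[OF t wE] hh_meas]) (use dst t in blast)
        moreover have "(\<lambda>w. hh t (wrap (state \<sigma> B X0 \<omega> \<alpha>s t w))) = (\<lambda>w. wrap (state \<sigma> B X0' \<omega>' \<alpha>s t w))"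
          unfolding hh_def st by (simp add: wrap_wrap_add)
        ultimately show "distr M borel (\<lambda>w. wrap (state \<sigma> B X0' \<omega>' \<alpha>s t w)) = K' t \<omega>'" unfolding K'eq by simp
      qed
    qed
    show "\<exists>K. \<exists>E\<in>sets borel. emeasure g' E = 1 \<and>
        (\<forall>t\<ge>0. \<forall>A\<in>sets borel. (\<lambda>w. emeasure (K t w) A) \<in> borel_measurable borel) \<and>
        (\<forall>t\<ge>0. \<forall>A\<in>sets borel. \<forall>C\<in>sets borel.
           emeasure (\<mu>' t) (A \<times> C) = (\<integral>\<^sup>+ w\<in>C. emeasure (K t w) A \<partial>g')) \<and>
        (\<forall>\<omega>\<in>E. (\<forall>t\<ge>0. is_prob_torus (K t \<omega>)) \<and>
           (\<exists>X0. X0 \<in> borel_measurable (F 0) \<and> distr M borel (\<lambda>w. wrap (X0 w)) = K 0 \<omega> \<and>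
              (\<exists>\<alpha>s\<in>admissible M F.
                 (INF \<alpha>\<in>admissible M F. cost_J M B \<sigma> \<beta> \<kappa> X0 \<omega> \<mu>' \<alpha>)
                   = cost_J M B \<sigma> \<beta> \<kappa> X0 \<omega> \<mu>' \<alpha>s \<and>
                 (\<forall>t\<ge>0. distr M borel (\<lambda>w. wrap (state \<sigma> B X0 \<omega> \<alpha>s t w)) = K t \<omega>))))"
      by (intro exI[of _ K'] bexI[OF _ E'b] conjI P1 P2 P3 P4)
  qed
qed

end
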